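(* Consider the network game with symmetric adjacency matrix $A\in\{0,1\}^{n\times n}$, parameter $\beta>0$ with $\beta\lambda_1(A)<1$, and standalone value vector $b\in\mathbb{R}^n_{\ge0}$. Let $C>\max(\|b\|^2,1)$ and let $y^*$ be an optimal intervention of budget $C$. Let $\gamma\in[-1,1]$. Then for every $y\in\mathbb{R}^n$ with $\|y\|^2=C$ and $\rho(y,y^* )>\gamma$, the competitive ratio satisfies $$\frac{W(y)}{W(y^* )}\ge 1-4\sqrt{2(1-\gamma)}.$$
   Context: Network game: agents $1,\dots,n$ on an undirected graph with symmetric adjacency matrix $A$; agent $i$ chooses $a_i\in\mathbb{R}$ and has utility $u_i(a)=b_ia_i-\tfrac12a_i^2+\beta\sum_jA_{ij}a_ia_j$. Let $M=I-\beta A$. When the spectral radius of $\beta A$ is below $1$, the unique Nash equilibrium is $a^*=M^{-1}b$ and the social welfare at equilibrium is $\tfrac12(a^* )^\top a^*$. An intervention is a vector $y$ replacing $b$ by $b+y$ at cost $\|y\|^2$; $W(y)=\tfrac12\|M^{-1}(b+y)\|^2$ is the equilibrium welfare after intervention $y$. The optimal intervention of budget $C$ is $y^*\in\arg\max_{\|x\|=\sqrt C}W(x)$, and the competitive ratio of $y$ is $W(y)/W(y^* )$. $\lambda_1(A)$ is the largest eigenvalue of $A$. The cosine similarity of nonzero vectors is $\rho(z,y)=\frac{z\cdot y}{\|z\|\|y\|}$. $\|\cdot\|$ is the Euclidean norm. *)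

theory Defs
  imports "HOL-Analysis.Analysis"
begin

definition is_eigenvalue :: "real^'n^'n \<Rightarrow> real \<Rightarrow> bool" where
  "is_eigenvalue A l \<longleftrightarrow> (\<exists>v. v \<noteq> 0 \<and> A *v v = l *\<^sub>R v)"

text \<open>Largest eigenvalue lambda_1(A) (for a symmetric matrix all eigenvalues are real).\<close>
definition lambda1 :: "real^'n^'n \<Rightarrow> real" where
  "lambda1 A = Max {l. is_eigenvalue A l}"

definition Mmat :: "real \<Rightarrow> real^'n^'n \<Rightarrow> real^'n^'n" where
  "Mmat \<beta> A = mat 1 - \<beta> *\<^sub>R A"

definition welfare :: "real \<Rightarrow> real^'n^'n \<Rightarrow> real^'n \<Rightarrow> real^'n \<Rightarrow> real" where
  "welfare \<beta> A b y = (1/2) * (norm (matrix_inv (Mmat \<beta> A) *v (b + y)))^2"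

definition optimal_intervention ::
  "real \<Rightarrow> real^'n^'n \<Rightarrow> real^'n \<Rightarrow> real \<Rightarrow> real^'n \<Rightarrow> bool" where
  "optimal_intervention \<beta> A b C ys \<longleftrightarrow>
     norm ys = sqrt C \<and> (\<forall>x. norm x = sqrt C \<longrightarrow> welfare \<beta> A b x \<le> welfare \<beta> A b ys)"

definition cos_sim :: "real^'n \<Rightarrow> real^'n \<Rightarrow> real" where
  "cos_sim z y = (z \<bullet> y) / (norm z * norm y)"

end

theory Submission
  imports Defs
begin

lemma eig_indep:
  fixes A :: "real^'n^'n" and v :: "real \<Rightarrow> real^'n"
  assumes "finite S" and ev: "\<forall>l\<in>S. v l \<noteq> 0 \<and> A *v v l = l *\<^sub>R v l"
  shows "\<forall>c. (\<Sum>l\<in>S. c l *\<^sub>R v l) = 0 \<longrightarrow> (\<forall>l\<in>S. c l = 0)"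
  using assms
proof (induction S rule: finite_induct)
  case empty then show ?case by simp
next
  case (insert m S)
  show ?case
  proof (intro allI impI)
    fix c assume h: "(\<Sum>l\<in>insert m S. c l *\<^sub>R v l) = 0"
    have h1: "c m *\<^sub>R v m + (\<Sum>l\<in>S. c l *\<^sub>R v l) = 0" using h insert by simp
    have "A *v (c m *\<^sub>R v m + (\<Sum>l\<in>S. c l *\<^sub>R v l)) = 0" using h1 by simp
    then have h2: "(c m * m) *\<^sub>R v m + (\<Sum>l\<in>S. (c l * l) *\<^sub>R v l) = 0"
      using insert.prems
      by (simp add: linear_add[OF matrix_vector_mul_linear] matrix_vector_mult_scaleR
          linear_sum[OF matrix_vector_mul_linear])
    have "m *\<^sub>R (c m *\<^sub>R v m + (\<Sum>l\<in>S. c l *\<^sub>R v l)) = 0" using h1 by simp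
    then have h3: "(c m * m) *\<^sub>R v m + (\<Sum>l\<in>S. (c l * m) *\<^sub>R v l) = 0"
      by (simp add: scaleR_sum_right algebra_simps)
    have "(\<Sum>l\<in>S. (c l * (l - m)) *\<^sub>R v l) = 0"
      proof -
      have "(\<Sum>l\<in>S. (c l * (l - m)) *\<^sub>R v l) = (\<Sum>l\<in>S. (c l * l) *\<^sub>R v l) - (\<Sum>l\<in>S. (c l * m) *\<^sub>R v l)"
        by (simp add: sum_subtractf[symmetric] algebra_simps)
      also have "\<dots> = 0"
      proof -
        have "(\<Sum>l\<in>S. (c l * l) *\<^sub>R v l) = (\<Sum>l\<in>S. (c l * m) *\<^sub>R v l)"
          using h2 h3 add_left_imp_eq by (metis (no_types, lifting))
        then show ?thesis by simp
      qed
      finally show ?thesis .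
    qed
    moreover have evS: "\<forall>l\<in>S. v l \<noteq> 0 \<and> A *v v l = l *\<^sub>R v l" using insert.prems by simp
    ultimately have "\<forall>l\<in>S. c l * (l - m) = 0" using spec[OF insert.IH[OF evS], of "\<lambda>l. c l * (l - m)"] by simp
    then have z: "\<forall>l\<in>S. c l = 0" using insert.hyps(2) by auto
    then have "c m *\<^sub>R v m = 0" using h1 by simp
    then have "c m = 0" using insert.prems by simp
    then show "\<forall>l\<in>insert m S. c l = 0" using z by simp
  qed
qed

lemma eig_card:
  fixes A :: "real^'n^'n"
  assumes "finite S" "S \<subseteq> {l. is_eigenvalue A l}"
  shows "card S \<le> CARD('n)"
proof -
  define v where "v l = (SOME w. w \<noteq> 0 \<and> A *v w = l *\<^sub>R w)" for l
  have ev: "\<forall>l\<in>S. v l \<noteq> 0 \<and> A *v v l = l *\<^sub>R v l"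
  proof
    fix l assume "l \<in> S"
    then have "\<exists>w. w \<noteq> 0 \<and> A *v w = l *\<^sub>R w" using assms(2) is_eigenvalue_def by blast
    then show "v l \<noteq> 0 \<and> A *v v l = l *\<^sub>R v l" unfolding v_def by (rule someI_ex)
  qed
  have inj: "inj_on v S"
  proof (rule inj_onI)
    fix a b assume ab: "a \<in> S" "b \<in> S" "v a = v b"
    show "a = b"
    proof (rule ccontr)
      assume "a \<noteq> b"
      have "a *\<^sub>R v a = b *\<^sub>R v a" using ev ab by metis
      then have "(a - b) *\<^sub>R v a = 0" by (simp add: algebra_simps)
      then show False using \<open>a \<noteq> b\<close> ev ab by simp
    qed
  qed
  have "independent (v ` S)"
  proof
    assume "dependent (v ` S)"
    then obtain u where u: "\<exists>w\<in>v ` S. u w \<noteq> 0" "(\<Sum>w\<in>v ` S. u w *\<^sub>R w) = 0"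
      using assms(1) by (auto simp: dependent_finite)
    have "(\<Sum>l\<in>S. u (v l) *\<^sub>R v l) = 0" using u(2) sum.reindex[OF inj, of "\<lambda>w. u w *\<^sub>R w"] by simp
    then have "\<forall>l\<in>S. u (v l) = 0" using spec[OF eig_indep[OF assms(1) ev], of "\<lambda>l. u (v l)"] by simp
    then show False using u(1) by auto
  qed
  then have "card (v ` S) \<le> DIM(real^'n)" using independent_bound by blast
  then show ?thesis using card_image[OF inj] by simp
qed

lemma eig_finite:
  fixes A :: "real^'n^'n"
  shows "finite {l. is_eigenvalue A l}"
proof (rule ccontr)
  assume "infinite {l. is_eigenvalue A l}"
  then obtain B where "finite B" "card B = Suc CARD('n)" "B \<subseteq> {l. is_eigenvalue A l}"
    using infinite_arbitrarily_large by blast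
  then show False using eig_card[of B A] by simp
qed

lemma M_inv:
  fixes A :: "real^'n^'n"
  assumes bp: "\<beta> > 0" and sp: "\<beta> * lambda1 A < 1"
  shows "Mmat \<beta> A ** matrix_inv (Mmat \<beta> A) = mat 1"
proof -
  have "invertible (Mmat \<beta> A)"
  proof (rule ccontr)
    assume "\<not> invertible (Mmat \<beta> A)"
    then obtain x where x: "x \<noteq> 0" "Mmat \<beta> A *v x = 0"
      using invertible_left_inverse matrix_left_invertible_ker by blast
    have "Mmat \<beta> A *v x = x - \<beta> *\<^sub>R (A *v x)"
      by (simp add: Mmat_def matrix_vector_mult_diff_rdistrib scaleR_matrix_vector_assoc)
    then have "\<beta> *\<^sub>R (A *v x) = x" using x by simp
    then have "A *v x = (1/\<beta>) *\<^sub>R x" using bp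
      by (metis divide_inverse_commute inverse_eq_divide mult.commute nonzero_mult_div_cancel_left not_less_iff_gr_or_eq scaleR_scaleR scaleR_one)
    then have "is_eigenvalue A (1/\<beta>)" using x is_eigenvalue_def by blast
    then have "1/\<beta> \<le> lambda1 A" unfolding lambda1_def using eig_finite Max_ge by blast
    then have "1 \<le> \<beta> * lambda1 A" using bp by (simp add: pos_divide_le_eq mult.commute)
    then show False using bp sp by simp
  qed
  then show ?thesis unfolding invertible_def matrix_inv_def by (rule someI2_ex) auto
qed

theorem mainTheorem3:
  fixes A :: "real^'n^'n" and b ys :: "real^'n" and \<beta> C \<gamma> :: real
  assumes symA: "transpose A = A"
    and A01: "\<forall>i j. A $ i $ j = 0 \<or> A $ i $ j = 1"
    and beta_pos: "\<beta> > 0"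
    and spec: "\<beta> * lambda1 A < 1"
    and b_nonneg: "\<forall>i. b $ i \<ge> 0"
    and C_big: "C > max ((norm b)^2) 1"
    and opt: "optimal_intervention \<beta> A b C ys"
    and gamma: "-1 \<le> \<gamma>" "\<gamma> \<le> 1"
  shows "\<forall>y. (norm y)^2 = C \<and> cos_sim y ys > \<gamma> \<longrightarrow>
           welfare \<beta> A b y / welfare \<beta> A b ys \<ge> 1 - 4 * sqrt (2 * (1 - \<gamma>))"
proof (intro allI impI)
  fix y assume hy: "(norm y)^2 = C \<and> cos_sim y ys > \<gamma>"
  define N where "N = matrix_inv (Mmat \<beta> A)"
  define D where "D = norm (N *v (b + ys))"
  define \<delta> where "\<delta> = sqrt (2 * (1 - \<gamma>))"
  have C0: "C > 0" "C > (norm b)^2" using C_big by auto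
  have sC: "sqrt C > 0" using C0 by simp
  have nys: "norm ys = sqrt C" using opt optimal_intervention_def by blast
  have ny: "norm y = sqrt C" using hy by (metis norm_ge_zero real_sqrt_abs real_sqrt_unique abs_of_nonneg)
  have wdef: "\<And>x. welfare \<beta> A b x = (1/2) * (norm (N *v (b + x)))^2"
    by (simp add: welfare_def N_def)
  have wnn: "\<And>x. welfare \<beta> A b x \<ge> 0" by (simp add: wdef)
  have MN: "Mmat \<beta> A ** N = mat 1" using M_inv[OF beta_pos spec] N_def by simp
  have bound1: "norm (N *v x) \<le> D" if "norm x = sqrt C" for x
  proof -
    have o1: "norm (N *v (b + x)) \<le> D" and o2: "norm (N *v (b + - x)) \<le> D"
    proof -
      have "welfare \<beta> A b x \<le> welfare \<beta> A b ys" "welfare \<beta> A b (-x) \<le> welfare \<beta> A b ys"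
        using opt that unfolding optimal_intervention_def by auto
      then have "(norm (N *v (b + x)))^2 \<le> D^2" "(norm (N *v (b + - x)))^2 \<le> D^2"
        by (auto simp: wdef D_def)
      then show "norm (N *v (b + x)) \<le> D" "norm (N *v (b + - x)) \<le> D"
        using D_def by (auto intro: power2_le_imp_le)
    qed
    let ?p = "N *v b" and ?q = "N *v x"
    have e1: "N *v (b + x) = ?p + ?q" by (simp add: linear_add[OF matrix_vector_mul_linear])
    have e2: "N *v (b + - x) = ?p - ?q" by (simp add: matrix_vector_mult_diff_distrib)
    have par: "(norm (?p + ?q))^2 + (norm (?p - ?q))^2 = 2 * (norm ?p)^2 + 2 * (norm ?q)^2"
      by (simp add: power2_norm_eq_inner inner_add_left inner_add_right inner_diff_left inner_diff_right inner_commute)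
    have "(norm ?q)^2 \<le> D^2"
    proof -
      have "(norm (?p + ?q))^2 \<le> D^2" "(norm (?p - ?q))^2 \<le> D^2"
        using o1 o2 e1 e2 by (auto intro: power_mono)
      then show ?thesis using par by (smt (verit) zero_le_power2)
    qed
    then show ?thesis using D_def by (auto intro: power2_le_imp_le)
  qed
  have bound2: "norm (N *v z) \<le> D * norm z / sqrt C" for z
  proof (cases "z = 0")
    case True then show ?thesis by simp
  next
    case False
    define x where "x = (sqrt C / norm z) *\<^sub>R z"
    have "norm x = sqrt C" using False sC by (simp add: x_def)
    then have "norm (N *v x) \<le> D" by (rule bound1)
    moreover have "norm (N *v x) = (sqrt C / norm z) * norm (N *v z)"
      using sC by (simp add: x_def matrix_vector_mult_scaleR)
    ultimately have "(sqrt C / norm z) * norm (N *v z) \<le> D" by simp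
    then show ?thesis using False sC by (simp add: field_simps)
  qed
  have cs: "cos_sim y ys = (y \<bullet> ys) / C" using ny nys C0 by (simp add: cos_sim_def)
  have "(norm (y - ys))^2 = 2 * C - 2 * (y \<bullet> ys)"
  proof -
    have "y \<bullet> y = C" "ys \<bullet> ys = C" using ny nys C0 by (simp_all add: dot_square_norm)
    then show ?thesis by (simp add: power2_norm_eq_inner inner_diff_left inner_diff_right inner_commute)
  qed
  also have "\<dots> \<le> C * \<delta>^2"
  proof -
    have "y \<bullet> ys > \<gamma> * C" using hy cs C0 by (simp add: field_simps)
    then show ?thesis using gamma by (simp add: \<delta>_def algebra_simps)
  qed
  finally have "(norm (y - ys))^2 \<le> (sqrt C * \<delta>)^2" using C0 by (simp add: power_mult_distrib)
  then have dist: "norm (y - ys) \<le> sqrt C * \<delta>"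
    by (rule power2_le_imp_le) (use sC gamma in \<open>simp add: \<delta>_def\<close>)
  have d0: "\<delta> \<ge> 0" using gamma by (simp add: \<delta>_def)
  have "norm (N *v (y - ys)) \<le> D * \<delta>"
  proof -
    have "norm (N *v (y - ys)) \<le> D * norm (y - ys) / sqrt C" by (rule bound2)
    also have "\<dots> \<le> D * (sqrt C * \<delta>) / sqrt C"
      using dist sC D_def by (intro divide_right_mono mult_left_mono) auto
    finally show ?thesis using sC by simp
  qed
  moreover have "N *v (b + y) = N *v (b + ys) + N *v (y - ys)"
    by (simp add: linear_add[OF matrix_vector_mul_linear, symmetric])
  ultimately have low: "norm (N *v (b + y)) \<ge> D - D * \<delta>"
    using D_def norm_diff_ineq[of "N *v (b + ys)" "N *v (y - ys)"] by simp
  show "welfare \<beta> A b y / welfare \<beta> A b ys \<ge> 1 - 4 * sqrt (2 * (1 - \<gamma>))"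
  proof (cases "\<delta> \<ge> 1/4")
    case True
    then have "1 - 4 * sqrt (2 * (1 - \<gamma>)) \<le> 0" using \<delta>_def by simp
    also have "0 \<le> welfare \<beta> A b y / welfare \<beta> A b ys" using wnn by simp
    finally show ?thesis .
  next
    case False
    have "b + ys \<noteq> 0"
    proof
      assume "b + ys = 0"
      then have "ys = - b" by (simp add: add_eq_0_iff)
      then have "(norm ys)^2 = (norm b)^2" by simp
      then show False using nys C0 by simp
    qed
    moreover have "Mmat \<beta> A *v (N *v (b + ys)) = b + ys" by (simp add: matrix_vector_mul_assoc MN)
    ultimately have "N *v (b + ys) \<noteq> 0" by auto
    then have Dp: "D > 0" using D_def by simp
    have "D * (1 - \<delta>) \<le> norm (N *v (b + y))" using low by (simp add: algebra_simps)
    moreover have "D * (1 - \<delta>) \<ge> 0" using False Dp by simp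
    ultimately have "(D * (1 - \<delta>))^2 \<le> (norm (N *v (b + y)))^2" by (rule power_mono)
    then have "welfare \<beta> A b y \<ge> (1/2) * D^2 * (1 - \<delta>)^2" by (simp add: wdef power_mult_distrib)
    moreover have "welfare \<beta> A b ys = (1/2) * D^2" by (simp add: wdef D_def)
    ultimately have "welfare \<beta> A b y / welfare \<beta> A b ys \<ge> (1 - \<delta>)^2"
    proof -
      assume a1: "welfare \<beta> A b y \<ge> (1/2) * D^2 * (1 - \<delta>)^2" and a2: "welfare \<beta> A b ys = (1/2) * D^2"
      have "D^2 > 0" using Dp by simp
      then have wp: "welfare \<beta> A b ys > 0" using a2 by linarith
      have "(1 - \<delta>)^2 * welfare \<beta> A b ys = (1/2) * D^2 * (1 - \<delta>)^2" using a2 by simp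
      then have "(1 - \<delta>)^2 * welfare \<beta> A b ys \<le> welfare \<beta> A b y" using a1 by linarith
      then show ?thesis using wp by (simp add: pos_le_divide_eq)
    qed
    moreover have "(1 - \<delta>)^2 \<ge> 1 - 4 * \<delta>" using d0 by (simp add: power2_eq_square algebra_simps)
    ultimately show ?thesis using \<delta>_def by simp
  qed
qed

end
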